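(* Let $\{\mathbf{G}_k\}_{k\ge1}$ be (any realization of) the observed chain of the Sampled Moran Genealogy Process with population size $n$, sample times $t_1<t_2<\cdots$ and attachment times $\{a_k\}_{k\ge2}$, and define $m(j,k)$ as below. Then for every $k\ge2$, \[ \sum_{j=1}^{k-1}\ \sum_{e\in\mathrm{live}(\mathbf{G}_j)}\log\frac{n-\ell_j(e)}{n-\ell_j(e)-1}\,\mathbf 1\{e>a_{j+1}\}=\sum_{j=1}^{k-1}\log\frac{n}{n-m(j,k)}. \]
   Context: In the Sampled Moran Genealogy Process, a population of constant size $n$ evolves under Moran dynamics (at rate-$\mu$ events an ordered pair of distinct individuals is chosen uniformly, the first dies and the second gives birth), and at each deterministic time $t_i$ ($t_1<t_2<\cdots$) one living individual is sampled. The observed genealogy $\mathbf{G}_k$ is the genealogy formed by the ancestral lineages of samples $1,\dots,k$ (sample $i$'s lineage traced back from $t_i$). For $j\ge2$ the attachment time $a_j\le t_{j-1}$ is the most recent time $s$ at which the ancestor at time $s$ of sample $j$ coincides with the ancestor-or-self at time $s$ of some sample $i<j$ with $t_i\ge s$; $a_j$ is either a sample time (direct descent) or not a sample time (a branch point). Sample $i\le k$ is dead in $\mathbf{G}_k$ if $a_j=t_i$ for some $i<j\le k$, live otherwise; $\mathrm{live}(\mathbf{G}_k)$ is the set of sample times of live samples. Branch points of $\mathbf{G}_k$: the $a_j$, $2\le j\le k$, that are not sample times. $\ell_k(t)=|\{e\in\mathrm{live}(\mathbf{G}_k):e>t\}|-|\{\text{branch points }b\text{ of }\mathbf{G}_k:b>t\}|$.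 For $j\le k$, $m(j,k)=|\{i: j<i\le k,\ a_i<t_j,\ \text{and } a_r\ne t_j \text{ for all } r<i\}|$, the number of samples attaching to the left of $t_j$ before sample $j$ dies (or before $k$ is reached). *)

theory Defs
  imports Complex_Main
begin

text \<open>Individuals alive at a time are identified by their slot in 0..<n.
  The Moran events form a locally finite set E of event times; at an event time tau
  the individual in slot dth tau dies and is replaced by an offspring of the individual
  in slot bth tau.  Sample i (i >= 1) is the individual in slot sig i at time t i.
  Convention at an event time tau: the population at time tau is the pre-event one.\<close>

text \<open>Slot at time s of the ancestor of the individual in slot x at time t (s <= t):
  trace the events in [s,t) backwards, latest first.\<close>
definition lin :: "real set \<Rightarrow> (real \<Rightarrow> nat) \<Rightarrow> (real \<Rightarrow> nat) \<Rightarrow> nat \<Rightarrow> real \<Rightarrow> real \<Rightarrow> nat" where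
  "lin E dth bth x tt s =
     fold (\<lambda>\<tau> c. if c = dth \<tau> then bth \<tau> else c)
          (rev (sorted_list_of_set (E \<inter> {s..<tt}))) x"

definition anc :: "real set \<Rightarrow> (real \<Rightarrow> nat) \<Rightarrow> (real \<Rightarrow> nat) \<Rightarrow> (nat \<Rightarrow> real) \<Rightarrow> (nat \<Rightarrow> nat) \<Rightarrow> nat \<Rightarrow> real \<Rightarrow> nat" where
  "anc E dth bth t sig i s = lin E dth bth (sig i) (t i) s"

definition meets :: "real set \<Rightarrow> (real \<Rightarrow> nat) \<Rightarrow> (real \<Rightarrow> nat) \<Rightarrow> (nat \<Rightarrow> real) \<Rightarrow> (nat \<Rightarrow> nat) \<Rightarrow> nat \<Rightarrow> real \<Rightarrow> bool" where
  "meets E dth bth t sig j s =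
     (\<exists>i. 1 \<le> i \<and> i < j \<and> s \<le> t i \<and> anc E dth bth t sig j s = anc E dth bth t sig i s)"

definition attach :: "real set \<Rightarrow> (real \<Rightarrow> nat) \<Rightarrow> (real \<Rightarrow> nat) \<Rightarrow> (nat \<Rightarrow> real) \<Rightarrow> (nat \<Rightarrow> nat) \<Rightarrow> nat \<Rightarrow> real" where
  "attach E dth bth t sig j = (GREATEST s. meets E dth bth t sig j s)"

definition is_sample_time :: "(nat \<Rightarrow> real) \<Rightarrow> real \<Rightarrow> bool" where
  "is_sample_time t x = (\<exists>i. 1 \<le> i \<and> x = t i)"

definition live :: "real set \<Rightarrow> (real \<Rightarrow> nat) \<Rightarrow> (real \<Rightarrow> nat) \<Rightarrow> (nat \<Rightarrow> real) \<Rightarrow> (nat \<Rightarrow> nat) \<Rightarrow> nat \<Rightarrow> real set" where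
  "live E dth bth t sig k =
     {t i | i. 1 \<le> i \<and> i \<le> k \<and> \<not> (\<exists>j. i < j \<and> j \<le> k \<and> attach E dth bth t sig j = t i)}"

definition branch_pts :: "real set \<Rightarrow> (real \<Rightarrow> nat) \<Rightarrow> (real \<Rightarrow> nat) \<Rightarrow> (nat \<Rightarrow> real) \<Rightarrow> (nat \<Rightarrow> nat) \<Rightarrow> nat \<Rightarrow> real set" where
  "branch_pts E dth bth t sig k =
     {attach E dth bth t sig j | j. 2 \<le> j \<and> j \<le> k \<and> \<not> is_sample_time t (attach E dth bth t sig j)}"

definition ell :: "real set \<Rightarrow> (real \<Rightarrow> nat) \<Rightarrow> (real \<Rightarrow> nat) \<Rightarrow> (nat \<Rightarrow> real) \<Rightarrow> (nat \<Rightarrow> nat) \<Rightarrow> nat \<Rightarrow> real \<Rightarrow> int" where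
  "ell E dth bth t sig k x =
     int (card {e \<in> live E dth bth t sig k. e > x}) - int (card {b \<in> branch_pts E dth bth t sig k. b > x})"

definition mcount :: "real set \<Rightarrow> (real \<Rightarrow> nat) \<Rightarrow> (real \<Rightarrow> nat) \<Rightarrow> (nat \<Rightarrow> real) \<Rightarrow> (nat \<Rightarrow> nat) \<Rightarrow> nat \<Rightarrow> nat \<Rightarrow> nat" where
  "mcount E dth bth t sig j k =
     card {i. j < i \<and> i \<le> k \<and> attach E dth bth t sig i < t j \<and>
              (\<forall>r. 2 \<le> r \<and> r < i \<longrightarrow> attach E dth bth t sig r \<noteq> t j)}"

end

theory Submission imports Defs begin
lemma sl_append:
  fixes A B :: "'a::linorder set"
  assumes "finite A" "finite B" "\<forall>a\<in>A. \<forall>b\<in>B. a < b"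
  shows "sorted_list_of_set (A \<union> B) = sorted_list_of_set A @ sorted_list_of_set B"
proof -
  let ?xs = "sorted_list_of_set A @ sorted_list_of_set B"
  have s: "sorted_wrt (<) ?xs" unfolding sorted_wrt_append using assms by simp
  have st: "set ?xs = A \<union> B" using assms by simp
  show ?thesis using strict_sorted_equal[OF s, of "sorted_list_of_set (A \<union> B)"] st assms by simp
qed

locale smgp =
  fixes n :: nat and t :: "nat \<Rightarrow> real" and E :: "real set"
    and dth bth :: "real \<Rightarrow> nat" and sig :: "nat \<Rightarrow> nat"
  assumes t_incr: "\<forall>i\<ge>1. t i < t (Suc i)"
    and E_locfin: "\<forall>a b. finite (E \<inter> {a..b})"
    and E_pairs: "\<forall>\<tau>\<in>E. dth \<tau> < n \<and> bth \<tau> < n \<and> dth \<tau> \<noteq> bth \<tau>"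
    and sig_ok: "\<forall>i\<ge>1. sig i < n"
    and t_notE: "\<forall>i\<ge>1. t i \<notin> E"
    and attach_ex: "\<forall>j\<ge>2. \<exists>s. meets E dth bth t sig j s"
begin

abbreviation "L \<equiv> lin E dth bth"

lemma t_mono: "1 \<le> i \<Longrightarrow> i < j \<Longrightarrow> t i < t j"
proof (induction j)
  case 0 then show ?case by simp
next
  case (Suc j)
  then show ?case using t_incr
    by (metis less_Suc_eq less_trans linorder_not_le not_less_eq order.strict_trans2)
qed

lemma t_less_iff: "1 \<le> i \<Longrightarrow> 1 \<le> j \<Longrightarrow> t i < t j \<longleftrightarrow> i < j"
  by (metis linorder_neq_iff not_less_iff_gr_or_eq t_mono)

lemma t_le_iff: "1 \<le> i \<Longrightarrow> 1 \<le> j \<Longrightarrow> t i \<le> t j \<longleftrightarrow> i \<le> j"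
  by (meson linorder_not_le t_less_iff)

lemma t_eq_iff: "1 \<le> i \<Longrightarrow> 1 \<le> j \<Longrightarrow> t i = t j \<longleftrightarrow> i = j"
  by (metis order_less_irrefl t_less_iff linorder_neq_iff)

lemma finE: "finite (E \<inter> {s..<tt})"
  using E_locfin by (meson atLeastLessThan_subseteq_atLeastAtMost_iff finite_subset inf_mono order_refl)

lemma lin_empty: "E \<inter> {s..<tt} = {} \<Longrightarrow> L x tt s = x"
  unfolding lin_def by simp

lemma lin_comp:
  assumes "s \<le> u" "u \<le> tt"
  shows "L x tt s = L (L x tt u) u s"
proof -
  have eq: "E \<inter> {s..<tt} = (E \<inter> {s..<u}) \<union> (E \<inter> {u..<tt})" using assms by auto
  have "sorted_list_of_set (E \<inter> {s..<tt}) = sorted_list_of_set (E \<inter> {s..<u}) @ sorted_list_of_set (E \<inter> {u..<tt})"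
    unfolding eq by (rule sl_append) (auto simp: finE)
  then show ?thesis unfolding lin_def by simp
qed

lemma lin_point:
  assumes "E \<inter> {s..<tt} \<subseteq> {s}" "s < tt"
  shows "L x tt s = (if s \<in> E \<and> x = dth s then bth s else x)"
proof (cases "s \<in> E")
  case False
  then have "E \<inter> {s..<tt} = {}" using assms by auto
  then show ?thesis using False by (simp add: lin_empty)
next
  case True
  then have "E \<inter> {s..<tt} = {s}" using assms by auto
  then show ?thesis unfolding lin_def using True by auto
qed

lemma fold_bound: "(\<forall>\<tau>\<in>set xs. \<tau> \<in> E) \<Longrightarrow> x < n \<Longrightarrow>
   fold (\<lambda>\<tau> c. if c = dth \<tau> then bth \<tau> else c) xs x < n"
  by (induction xs arbitrary: x) (auto simp: E_pairs)

lemma lin_bound: "x < n \<Longrightarrow> L x tt s < n"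
  unfolding lin_def by (rule fold_bound) (auto simp: finE)

lemma gap: "\<exists>\<epsilon>>0. \<forall>\<tau>\<in>E. \<tau> \<noteq> c \<longrightarrow> \<epsilon> < \<bar>\<tau> - c\<bar>"
proof -
  define F where "F = E \<inter> {c-1..c+1} - {c}"
  have fF: "finite F" unfolding F_def using E_locfin by auto
  define m where "m = Min (insert 1 ((\<lambda>\<tau>. \<bar>\<tau> - c\<bar>) ` F))"
  have mpos: "m > 0" unfolding m_def using fF by (auto simp: F_def)
  show ?thesis
  proof (intro exI[of _ "m/2"] conjI ballI impI)
    show "m/2 > 0" using mpos by simp
    fix \<tau> assume "\<tau> \<in> E" "\<tau> \<noteq> c"
    show "m/2 < \<bar>\<tau> - c\<bar>"
    proof (cases "\<bar>\<tau> - c\<bar> \<le> 1")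
      case True
      then have "\<tau> \<in> F" unfolding F_def using \<open>\<tau> \<in> E\<close> \<open>\<tau> \<noteq> c\<close> by auto
      then have "m \<le> \<bar>\<tau> - c\<bar>" unfolding m_def using fF by auto
      then show ?thesis using mpos by simp
    next
      case False
      have "m \<le> 1" unfolding m_def using fF by auto
      then show ?thesis using False mpos by simp
    qed
  qed
qed


abbreviation "anc' \<equiv> anc E dth bth t sig"
abbreviation "mt \<equiv> meets E dth bth t sig"
abbreviation "aT \<equiv> attach E dth bth t sig"

lemma anc_self: "anc' i (t i) = sig i"
  unfolding anc_def by (simp add: lin_empty)

lemma anc_comp: "s \<le> u \<Longrightarrow> u \<le> t i \<Longrightarrow> anc' i s = L (anc' i u) u s"
  unfolding anc_def by (rule lin_comp)

lemma anc_const: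
  assumes "s \<le> c" "c \<le> t i" "E \<inter> {s..<c} = {}"
  shows "anc' i s = anc' i c"
  using anc_comp[OF assms(1,2)] lin_empty[OF assms(3)] by simp

lemma pair_max:
  assumes "s0 \<le> t i" "anc' j s0 = anc' i s0" "1 \<le> i" "i < j"
  shows "\<exists>c. c \<le> t i \<and> anc' j c = anc' i c \<and> (\<forall>s. s \<le> t i \<and> anc' j s = anc' i s \<longrightarrow> s \<le> c)"
proof -
  define M where "M = {s. s \<le> t i \<and> anc' j s = anc' i s}"
  have ne: "M \<noteq> {}" using assms unfolding M_def by auto
  have bdd: "bdd_above M" unfolding M_def by (auto intro: bdd_aboveI)
  define c where "c = Sup M"
  have ub: "\<And>s. s \<in> M \<Longrightarrow> s \<le> c" unfolding c_def using bdd by (simp add: cSup_upper)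
  have cle: "c \<le> t i" unfolding c_def using ne by (rule cSup_least) (auto simp: M_def)
  have tij: "t i < t j" using assms t_mono by simp
  obtain \<epsilon> where ep: "\<epsilon> > 0" "\<forall>\<tau>\<in>E. \<tau> \<noteq> c \<longrightarrow> \<epsilon> < \<bar>\<tau> - c\<bar>" using gap by blast
  have "c - \<epsilon> < Sup M" using ep unfolding c_def by simp
  then obtain s where s: "s \<in> M" "c - \<epsilon> < s" using less_cSup_iff[OF ne bdd] by blast
  have sc: "s \<le> c" using ub s by simp
  have emp: "E \<inter> {s..<c} = {}"
  proof (rule ccontr)
    assume "E \<inter> {s..<c} \<noteq> {}"
    then obtain \<tau> where "\<tau> \<in> E" "s \<le> \<tau>" "\<tau> < c" by auto
    then show False using ep s by force
  qed
  have "anc' j s = anc' j c" by (rule anc_const[OF sc _ emp]) (use cle tij in simp)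
  moreover have "anc' i s = anc' i c" by (rule anc_const[OF sc cle emp])
  ultimately have "c \<in> M" using s cle unfolding M_def by simp
  then show ?thesis using ub unfolding M_def by blast
qed

lemma attach_props:
  assumes "2 \<le> j"
  shows "mt j (aT j) \<and> (\<forall>s. mt j s \<longrightarrow> s \<le> aT j)"
proof -
  define I where "I = {i. 1 \<le> i \<and> i < j \<and> (\<exists>s. s \<le> t i \<and> anc' j s = anc' i s)}"
  have fI: "finite I" unfolding I_def by auto
  have neI: "I \<noteq> {}" using attach_ex assms unfolding I_def meets_def by fastforce
  define mx where "mx i = (SOME c. c \<le> t i \<and> anc' j c = anc' i c \<and> (\<forall>s. s \<le> t i \<and> anc' j s = anc' i s \<longrightarrow> s \<le> c))" for i
  have mx: "mx i \<le> t i \<and> anc' j (mx i) = anc' i (mx i) \<and> (\<forall>s. s \<le> t i \<and> anc' j s = anc' i s \<longrightarrow> s \<le> mx i)"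
    if "i \<in> I" for i
  proof -
    from that obtain s0 where "s0 \<le> t i" "anc' j s0 = anc' i s0" "1 \<le> i" "i < j" unfolding I_def by auto
    from pair_max[OF this] show ?thesis unfolding mx_def by (rule someI_ex)
  qed
  define c where "c = Max (mx ` I)"
  have "c \<in> mx ` I" unfolding c_def using fI neI by simp
  then obtain i0 where i0: "i0 \<in> I" "c = mx i0" by auto
  have m1: "mt j c" unfolding meets_def using mx[OF i0(1)] i0 unfolding I_def by auto
  have m2: "s \<le> c" if "mt j s" for s
  proof -
    from that obtain i where "1 \<le> i" "i < j" "s \<le> t i" "anc' j s = anc' i s" unfolding meets_def by auto
    then have iI: "i \<in> I" unfolding I_def by auto
    then have "s \<le> mx i" using mx \<open>s \<le> t i\<close> \<open>anc' j s = anc' i s\<close> by blast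
    also have "mx i \<le> c" unfolding c_def using fI iI by simp
    finally show ?thesis .
  qed
  have "aT j = c" unfolding attach_def by (rule Greatest_equality) (use m1 m2 in auto)
  then show ?thesis using m1 m2 by simp
qed

lemma at_meets: "2 \<le> j \<Longrightarrow> mt j (aT j)" using attach_props by blast
lemma at_max: "2 \<le> j \<Longrightarrow> mt j s \<Longrightarrow> s \<le> aT j" using attach_props by blast

lemma at_le: "2 \<le> j \<Longrightarrow> aT j \<le> t (j - 1)"
proof -
  assume j: "2 \<le> j"
  from at_meets[OF j] obtain i where "1 \<le> i" "i < j" "aT j \<le> t i" unfolding meets_def by auto
  moreover have "t i \<le> t (j - 1)" using t_le_iff \<open>1 \<le> i\<close> \<open>i < j\<close> by simp
  ultimately show ?thesis by simp
qed

lemma at_less: "2 \<le> j \<Longrightarrow> j \<le> p \<Longrightarrow> aT j < t p"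
proof -
  assume "2 \<le> j" "j \<le> p"
  then have "t (j-1) < t p" using t_mono by simp
  then show ?thesis using at_le \<open>2 \<le> j\<close> by fastforce
qed


lemma at_distinct:
  assumes j: "2 \<le> j" and jj: "j < j'"
  shows "aT j \<noteq> aT j'"
proof
  assume eq: "aT j = aT j'"
  define c where "c = aT j"
  have j2': "2 \<le> j'" using j jj by simp
  obtain \<epsilon> where ep: "\<epsilon> > 0" "\<forall>\<tau>\<in>E. \<tau> \<noteq> c \<longrightarrow> \<epsilon> < \<bar>\<tau> - c\<bar>" using gap by blast
  define Q where "Q = {q \<in> {1..j'}. c < t q}"
  define \<rho> where "\<rho> = Min (insert \<epsilon> ((\<lambda>q. t q - c) ` Q))"
  have fQ: "finite Q" unfolding Q_def by simp
  have rpos: "\<rho> > 0" unfolding \<rho>_def using fQ ep by (auto simp: Q_def)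
  have rle: "\<rho> \<le> \<epsilon>" unfolding \<rho>_def using fQ by simp
  define s where "s = c + \<rho>/2"
  have cs: "c < s" unfolding s_def using rpos by simp
  have sle: "s \<le> t q" if "1 \<le> q" "q \<le> j'" "c < t q" for q
  proof -
    have "q \<in> Q" using that unfolding Q_def by simp
    then have "\<rho> \<le> t q - c" unfolding \<rho>_def using fQ by simp
    then show ?thesis unfolding s_def using rpos by simp
  qed
  have Esub: "E \<inter> {c..<s} \<subseteq> {c}"
  proof
    fix \<tau> assume "\<tau> \<in> E \<inter> {c..<s}"
    then have "\<tau> \<in> E" "c \<le> \<tau>" "\<tau> < s" by auto
    show "\<tau> \<in> {c}"
    proof (rule ccontr)
      assume "\<tau> \<notin> {c}"
      then have "\<epsilon> < \<bar>\<tau> - c\<bar>" using ep \<open>\<tau> \<in> E\<close> by auto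
      then show False using \<open>c \<le> \<tau>\<close> \<open>\<tau> < s\<close> rle rpos unfolding s_def by simp
    qed
  qed
  define \<phi> where "\<phi> x = (if c \<in> E \<and> x = dth c then bth c else x)" for x
  have ancphi: "anc' q c = \<phi> (anc' q s)" if "1 \<le> q" "q \<le> j'" "c < t q" for q
    using anc_comp[of c s q] sle[OF that] cs lin_point[OF Esub cs] unfolding \<phi>_def by simp
  have nm: "\<not> mt j s" "\<not> mt j' s"
    using at_max[OF j, of s] at_max[OF j2', of s] eq cs unfolding c_def by auto
  obtain w where w: "1 \<le> w" "w < j" "c \<le> t w" "anc' j c = anc' w c"
    using at_meets[OF j] unfolding meets_def c_def by auto
  obtain w' where w': "1 \<le> w'" "w' < j'" "c \<le> t w'" "anc' j' c = anc' w' c"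
    using at_meets[OF j2'] eq unfolding meets_def c_def by auto
  have tj: "c < t j" using at_less[OF j, of j] unfolding c_def by simp
  have tj': "c < t j'" using at_less[OF j2', of j'] eq unfolding c_def by simp
  show False
  proof (cases "c \<in> E")
    case True
    have tw: "c < t w" using w t_notE True by (metis order_le_less)
    have tw': "c < t w'" using w' t_notE True by (metis order_le_less)
    have e1: "\<phi> (anc' j s) = \<phi> (anc' w s)" using w ancphi[of j] ancphi[of w] tj tw j jj by simp
    have e2: "\<phi> (anc' j' s) = \<phi> (anc' w' s)" using w' ancphi[of j'] ancphi[of w'] tj' tw' j jj by simp
    have sw: "s \<le> t w" using sle[of w] w tw jj by simp
    have sw': "s \<le> t w'" using sle[of w'] w' tw' by simp
    have sj: "s \<le> t j" using sle[of j] tj j jj by simp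
    have n1: "anc' j s \<noteq> anc' w s" using nm(1) w sw unfolding meets_def by auto
    have n2: "anc' j' s \<noteq> anc' w' s" using nm(2) w' sw' unfolding meets_def by auto
    have n3: "anc' j' s \<noteq> anc' j s" using nm(2) j jj sj unfolding meets_def by auto
    have n4: "anc' j' s \<noteq> anc' w s" using nm(2) w jj sw unfolding meets_def by auto
    have db: "dth c \<noteq> bth c" using E_pairs True by auto
    have phi2: "x \<in> {dth c, bth c} \<and> y \<in> {dth c, bth c}" if "\<phi> x = \<phi> y" "x \<noteq> y" for x y
      using that True unfolding \<phi>_def by (auto split: if_splits)
    show False using phi2[OF e1 n1] phi2[OF e2 n2] n1 n3 n4 db by auto
  next
    case False
    have id: "anc' q c = anc' q s" if "1 \<le> q" "q \<le> j'" "c < t q" for q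
      using ancphi[OF that] False unfolding \<phi>_def by simp
    have sj: "s \<le> t j" using sle[of j] tj j jj by simp
    have tw': "t w' = c"
    proof (rule ccontr)
      assume "t w' \<noteq> c"
      then have tw': "c < t w'" using w' by simp
      have "anc' j' s = anc' w' s" using id[of j'] id[of w'] w' tj' tw' j2' by simp
      moreover have "s \<le> t w'" using sle[of w'] w' tw' by simp
      ultimately show False using nm(2) w' unfolding meets_def by auto
    qed
    have tw: "t w = c"
    proof (rule ccontr)
      assume "t w \<noteq> c"
      then have tw: "c < t w" using w by simp
      have "anc' j s = anc' w s" using id[of j] id[of w] w tj tw j jj by simp
      moreover have "s \<le> t w" using sle[of w] w tw jj by simp
      ultimately show False using nm(1) w unfolding meets_def by auto
    qed
    have "w = w'" using tw tw' t_eq_iff[of w w'] w(1) w'(1) by simp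
    then have "anc' j' s = anc' j s" using id[of j'] id[of j] tj tj' j jj w w' by simp
    then show False using nm(2) j jj sj unfolding meets_def by auto
  qed
qed


lemma mbound:
  assumes i: "1 \<le> i" and fS: "finite S" and S: "S \<subseteq> {p. i < p \<and> aT p < t i}"
  shows "card S < n"
proof -
  define f where "f p = anc' p (t i)" for p
  have inj: "inj_on f (insert i S)"
  proof (rule linorder_inj_onI')
    fix p q assume p: "p \<in> insert i S" and q: "q \<in> insert i S" and pq: "p < q"
    have qS: "q \<in> S" using p q pq S by auto
    then have q2: "2 \<le> q" "aT q < t i" "i < q" using S i by auto
    have pi: "i \<le> p" "1 \<le> p" using p S i by auto
    show "f p \<noteq> f q"
    proof
      assume "f p = f q"
      then have "mt q (t i)" unfolding meets_def f_def using pi pq t_le_iff[of i p] i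
        by (intro exI[of _ p]) auto
      then have "t i \<le> aT q" using at_max q2 by simp
      then show False using q2 by simp
    qed
  qed
  have rng: "f ` (insert i S) \<subseteq> {..<n}"
  proof
    fix y assume "y \<in> f ` (insert i S)"
    then obtain p where "p \<in> insert i S" "y = f p" by auto
    then have "1 \<le> p" using S i by auto
    then show "y \<in> {..<n}" unfolding \<open>y = f p\<close> f_def anc_def using sig_ok lin_bound by simp
  qed
  have "card (insert i S) \<le> n" using card_inj_on_le[OF inj rng] by simp
  moreover have "i \<notin> S" using S by auto
  ultimately show ?thesis using fS by simp
qed

abbreviation "lv \<equiv> live E dth bth t sig"
abbreviation "br \<equiv> branch_pts E dth bth t sig"
abbreviation "ll \<equiv> ell E dth bth t sig"
definition "alive i j = (\<not> (\<exists>j'. i < j' \<and> j' \<le> j \<and> aT j' = t i))"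

lemma live_eq: "lv j = t ` {i \<in> {1..j}. alive i j}"
  unfolding live_def alive_def by auto

lemma live_fin: "finite (lv j)" unfolding live_eq by simp

lemma br_eq: "br j = aT ` {p \<in> {2..j}. \<not> is_sample_time t (aT p)}"
  unfolding branch_pts_def by auto

lemma br_fin: "finite (br j)" unfolding br_eq by simp

lemma live_Suc: "lv (Suc j) = insert (t (Suc j)) (lv j - {aT (Suc j)})"
proof -
  have "x \<in> lv (Suc j) \<longleftrightarrow> x \<in> insert (t (Suc j)) (lv j - {aT (Suc j)})" for x
  proof
    assume "x \<in> lv (Suc j)"
    then obtain i where i: "x = t i" "1 \<le> i" "i \<le> Suc j" "\<not> (\<exists>j'. i < j' \<and> j' \<le> Suc j \<and> aT j' = t i)"
      unfolding live_def by auto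
    show "x \<in> insert (t (Suc j)) (lv j - {aT (Suc j)})"
    proof (cases "i = Suc j")
      case True then show ?thesis using i by simp
    next
      case False
      then have "i \<le> j" using i by simp
      then show ?thesis using i unfolding live_def by auto
    qed
  next
    assume x: "x \<in> insert (t (Suc j)) (lv j - {aT (Suc j)})"
    show "x \<in> lv (Suc j)"
    proof (cases "x = t (Suc j)")
      case True then show ?thesis unfolding live_def by auto
    next
      case False
      then have "x \<in> lv j" "x \<noteq> aT (Suc j)" using x by auto
      then obtain i where i: "x = t i" "1 \<le> i" "i \<le> j" "\<not> (\<exists>j'. i < j' \<and> j' \<le> j \<and> aT j' = t i)"
        unfolding live_def by auto
      have "\<not> (\<exists>j'. i < j' \<and> j' \<le> Suc j \<and> aT j' = t i)"
        using i \<open>x \<noteq> aT (Suc j)\<close> by (metis le_Suc_eq)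
      then show ?thesis unfolding live_def using i by auto
    qed
  qed
  then show ?thesis by blast
qed

lemma br_Suc: "1 \<le> j \<Longrightarrow> br (Suc j) = br j \<union> (if is_sample_time t (aT (Suc j)) then {} else {aT (Suc j)})"
proof -
  assume "1 \<le> j"
  have "{p \<in> {2..Suc j}. \<not> is_sample_time t (aT p)} = {p \<in> {2..j}. \<not> is_sample_time t (aT p)}
     \<union> (if is_sample_time t (aT (Suc j)) then {} else {Suc j})"
    using \<open>1 \<le> j\<close> by (auto simp: le_Suc_eq)
  then show ?thesis unfolding br_eq by simp
qed

lemma live_sub: "e \<in> lv j \<Longrightarrow> \<exists>i. 1 \<le> i \<and> i \<le> j \<and> e = t i"
  unfolding live_def by auto

lemma tSuc_notin: "t (Suc j) \<notin> lv j"
proof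
  assume "t (Suc j) \<in> lv j"
  then obtain i where "1 \<le> i" "i \<le> j" "t (Suc j) = t i" using live_sub by blast
  then show False using t_eq_iff[of "Suc j" i] by simp
qed

lemma ell_formula:
  assumes "1 \<le> j"
  shows "ll j x = (if x < t 1 then 1 else 0) + int (card {p \<in> {2..j}. aT p \<le> x \<and> x < t p})"
  using assms
proof (induction j rule: dec_induct)
  case base
  have "lv 1 = {t 1}" unfolding live_def by auto
  moreover have "br 1 = {}" unfolding branch_pts_def by auto
  moreover have "{p \<in> {2..1::nat}. aT p \<le> x \<and> x < t p} = {}" by auto
  moreover have "{e \<in> {t 1}. x < e} = (if x < t 1 then {t 1} else {})" by auto
  ultimately show ?case unfolding ell_def by simp
next
  case (step j)
  define a where "a = aT (Suc j)"
  have aless: "a < t (Suc j)" unfolding a_def using at_less[of "Suc j" "Suc j"] step by simp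
  have cardP: "card {p \<in> {2..Suc j}. aT p \<le> x \<and> x < t p} = card {p \<in> {2..j}. aT p \<le> x \<and> x < t p}
      + (if a \<le> x \<and> x < t (Suc j) then 1 else 0)"
  proof -
    have "{p \<in> {2..Suc j}. aT p \<le> x \<and> x < t p} = {p \<in> {2..j}. aT p \<le> x \<and> x < t p}
        \<union> (if a \<le> x \<and> x < t (Suc j) then {Suc j} else {})"
      using step unfolding a_def by (auto simp: le_Suc_eq)
    then show ?thesis by simp
  qed
  have abr: "a \<notin> br j"
  proof
    assume "a \<in> br j"
    then obtain p where "2 \<le> p" "p \<le> j" "a = aT p" unfolding br_eq by auto
    then show False using at_distinct[of p "Suc j"] unfolding a_def by simp
  qed
  have fl: "finite {e \<in> lv j. x < e}" using live_fin by simp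
  have fb: "finite {e \<in> br j. x < e}" using br_fin by simp
  have key: "ll (Suc j) x = ll j x + (if x < t (Suc j) then 1 else 0) - (if x < a then 1 else 0)"
  proof (cases "is_sample_time t a")
    case True
    then obtain r where r: "1 \<le> r" "a = t r" unfolding is_sample_time_def by auto
    have "t r \<le> t j" using at_le[of "Suc j"] step r unfolding a_def by simp
    then have rj: "r \<le> j" using t_le_iff r step by simp
    have alr: "a \<in> lv j"
    proof -
      have "\<not> (\<exists>j'. r < j' \<and> j' \<le> j \<and> aT j' = t r)"
      proof
        assume "\<exists>j'. r < j' \<and> j' \<le> j \<and> aT j' = t r"
        then obtain j' where "r < j'" "j' \<le> j" "aT j' = t r" by blast
        moreover have "aT j' \<noteq> aT (Suc j)" using at_distinct[of j' "Suc j"] \<open>r < j'\<close> \<open>j' \<le> j\<close> r by simp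
        ultimately show False using r unfolding a_def by simp
      qed
      then show ?thesis unfolding live_def using r rj by auto
    qed
    have "{e \<in> lv (Suc j). x < e} = (if x < t (Suc j) then insert (t (Suc j)) else (\<lambda>A. A)) ({e \<in> lv j. x < e} - {a})"
      unfolding live_Suc a_def by auto
    moreover have "int (card ({e \<in> lv j. x < e} - {a})) = int (card {e \<in> lv j. x < e}) - (if x < a then 1 else 0)"
    proof (cases "x < a")
      case True
      then have "a \<in> {e \<in> lv j. x < e}" using alr by simp
      then have "card {e \<in> lv j. x < e} > 0" using fl card_gt_0_iff by blast
      then show ?thesis using fl \<open>a \<in> {e \<in> lv j. x < e}\<close> True by (simp add: card_Diff_singleton_if of_nat_diff)
    qed simp
    moreover have "t (Suc j) \<notin> {e \<in> lv j. x < e} - {a}" using tSuc_notin by simp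
    moreover have "br (Suc j) = br j" using br_Suc[of j] step True unfolding a_def by simp
    ultimately show ?thesis unfolding ell_def using fl by (simp add: card_insert_if)
  next
    case False
    have anl: "a \<notin> lv j" using False live_sub unfolding is_sample_time_def by blast
    have "{e \<in> lv (Suc j). x < e} = (if x < t (Suc j) then insert (t (Suc j)) else (\<lambda>A. A)) {e \<in> lv j. x < e}"
      unfolding live_Suc using anl unfolding a_def by auto
    moreover have "{e \<in> br (Suc j). x < e} = (if x < a then insert a else (\<lambda>A. A)) {e \<in> br j. x < e}"
      using br_Suc[of j] step False unfolding a_def by auto
    ultimately show ?thesis unfolding ell_def using fl fb tSuc_notin abr by (simp add: card_insert_if)
  qed
  show ?case using key step.IH cardP aless by auto
qed


lemma rank_sum:
  fixes S :: "nat set"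
  assumes "finite S"
  shows "(\<Sum>p\<in>S. h (card {q\<in>S. q < p})) = (\<Sum>c<card S. h c)"
  using assms
proof (induction "card S" arbitrary: S)
  case 0 then show ?case by simp
next
  case (Suc m S)
  have ne: "S \<noteq> {}" using Suc by auto
  define M where "M = Max S"
  have MS: "M \<in> S" unfolding M_def using Suc ne by simp
  define S' where "S' = S - {M}"
  have fS': "finite S'" "card S' = m" unfolding S'_def using Suc MS by auto
  have lt: "q < M" if "q \<in> S'" for q
    using that Suc.prems unfolding S'_def M_def by (simp add: order_neq_le_trans order.not_eq_order_implies_strict)
  have c1: "{q\<in>S. q < p} = {q\<in>S'. q < p}" if "p \<in> S'" for p
    using lt[OF that] unfolding S'_def by auto
  have c2: "{q\<in>S. q < M} = S'" using lt unfolding S'_def by auto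
  have "(\<Sum>p\<in>S. h (card {q\<in>S. q < p})) = h (card {q\<in>S. q < M}) + (\<Sum>p\<in>S'. h (card {q\<in>S. q < p}))"
    unfolding S'_def using Suc.prems MS by (simp add: sum.remove)
  also have "(\<Sum>p\<in>S'. h (card {q\<in>S. q < p})) = (\<Sum>p\<in>S'. h (card {q\<in>S'. q < p}))"
    using c1 by (intro sum.cong) auto
  also have "\<dots> = (\<Sum>c<m. h c)" using Suc.hyps(1)[of S'] fS' by simp
  finally show ?case using c2 fS' \<open>Suc m = card S\<close>[symmetric] by (simp add: add.commute)
qed

lemma telescope:
  assumes "m < n"
  shows "(\<Sum>c<m. ln ((real n - real c) / (real n - real c - 1))) = ln (real n / (real n - real m))"
  using assms
proof (induction m)
  case 0 then show ?case by simp
next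
  case (Suc m)
  have p1: "real n - real m - 1 > 0" using Suc.prems by simp
  have p2: "real n - real m > 0" using Suc.prems by simp
  have p0: "real n > 0" using Suc.prems by simp
  have "(\<Sum>c<Suc m. ln ((real n - real c) / (real n - real c - 1)))
      = ln (real n / (real n - real m)) + ln ((real n - real m) / (real n - real m - 1))"
    using Suc by simp
  also have "\<dots> = ln (real n / (real n - real m) * ((real n - real m) / (real n - real m - 1)))"
    by (subst ln_mult) (use p0 p1 p2 in auto)
  also have "real n / (real n - real m) * ((real n - real m) / (real n - real m - 1)) = real n / (real n - real (Suc m))"
  proof -
    define y where "y = real n - real m"
    have "y \<noteq> 0" using p2 unfolding y_def by simp
    then have e1: "real n / y * (y / (y - 1)) = real n / (y - 1)" by simp
    have e2: "real n - real (Suc m) = y - 1" unfolding y_def by simp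
    show ?thesis unfolding e2 y_def[symmetric] by (rule e1)
  qed
  finally show ?case .
qed

lemma per_i:
  assumes i1: "1 \<le> i" and ik: "i \<le> k - 1" and k: "2 \<le> k"
  shows "(\<Sum>j\<in>{1..k-1}. if i \<le> j \<and> alive i j \<and> aT (Suc j) < t i
            then ln ((real n - of_int (ll j (t i))) / (real n - of_int (ll j (t i)) - 1)) else 0)
         = ln (real n / (real n - real (mcount E dth bth t sig i k)))"
proof -
  define S where "S = {p. i < p \<and> p \<le> k \<and> aT p < t i \<and> (\<forall>r. 2 \<le> r \<and> r < p \<longrightarrow> aT r \<noteq> t i)}"
  have mc: "mcount E dth bth t sig i k = card S" unfolding mcount_def S_def by simp
  have fS: "finite S" unfolding S_def by (rule finite_subset[of _ "{..k}"]) auto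
  have cS: "card S < n" by (rule mbound[OF i1 fS]) (auto simp: S_def)
  define f where "f y = ln ((real n - of_int y) / (real n - of_int y - 1))" for y :: int
  have a: "(i \<le> j \<and> alive i j \<and> aT (Suc j) < t i) \<longleftrightarrow> Suc j \<in> S" if j: "j \<in> {1..k-1}" for j
  proof
    assume h: "i \<le> j \<and> alive i j \<and> aT (Suc j) < t i"
    have "aT r \<noteq> t i" if "2 \<le> r" "r < Suc j" for r
    proof (cases "r \<le> i")
      case True
      have "aT r < t r" using at_less[of r r] that by simp
      also have "t r \<le> t i" using t_le_iff[of r i] True that i1 by simp
      finally show ?thesis by simp
    next
      case False
      then show ?thesis using h that unfolding alive_def by auto
    qed
    then show "Suc j \<in> S" unfolding S_def using h j by auto
  next
    assume h: "Suc j \<in> S"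
    then have h1: "i < Suc j" "aT (Suc j) < t i" "\<forall>r. 2 \<le> r \<and> r < Suc j \<longrightarrow> aT r \<noteq> t i"
      unfolding S_def by auto
    have "alive i j" unfolding alive_def
    proof
      assume "\<exists>j'. i < j' \<and> j' \<le> j \<and> aT j' = t i"
      then obtain j' where "i < j'" "j' \<le> j" "aT j' = t i" by blast
      then show False using h1(3) i1 by (metis Suc_1 Suc_le_eq le_imp_less_Suc le_less_trans)
    qed
    then show "i \<le> j \<and> alive i j \<and> aT (Suc j) < t i" using h1 by simp
  qed
  have b: "ll j (t i) = int (card {q\<in>S. q < Suc j})" if j: "j \<in> {1..k-1}" and h: "Suc j \<in> S" for j
  proof -
    have "ll j (t i) = (if t i < t 1 then 1 else 0) + int (card {p \<in> {2..j}. aT p \<le> t i \<and> t i < t p})"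
      using ell_formula j by simp
    moreover have "\<not> t i < t 1" using t_le_iff[of 1 i] i1 by simp
    moreover have "{p \<in> {2..j}. aT p \<le> t i \<and> t i < t p} = {q\<in>S. q < Suc j}"
    proof
      show "{p \<in> {2..j}. aT p \<le> t i \<and> t i < t p} \<subseteq> {q\<in>S. q < Suc j}"
      proof
        fix p assume p: "p \<in> {p \<in> {2..j}. aT p \<le> t i \<and> t i < t p}"
        then have ip: "i < p" using t_less_iff[of i p] i1 by auto
        have hS: "\<forall>r. 2 \<le> r \<and> r < Suc j \<longrightarrow> aT r \<noteq> t i" using h unfolding S_def by simp
        then have "aT p \<noteq> t i" using p by auto
        then have "aT p < t i" using p by auto
        then show "p \<in> {q\<in>S. q < Suc j}" unfolding S_def using p ip hS j by auto
      qed
    next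
      show "{q\<in>S. q < Suc j} \<subseteq> {p \<in> {2..j}. aT p \<le> t i \<and> t i < t p}"
      proof
        fix q assume q: "q \<in> {q\<in>S. q < Suc j}"
        then have "i < q" "aT q < t i" unfolding S_def by auto
        moreover have "t i < t q" using t_mono[OF i1 \<open>i < q\<close>] .
        ultimately show "q \<in> {p \<in> {2..j}. aT p \<le> t i \<and> t i < t p}" using q i1 by auto
      qed
    qed
    ultimately show ?thesis by simp
  qed
  have "(\<Sum>j\<in>{1..k-1}. if i \<le> j \<and> alive i j \<and> aT (Suc j) < t i then f (ll j (t i)) else 0)
      = (\<Sum>j\<in>{1..k-1}. if Suc j \<in> S then f (int (card {q\<in>S. q < Suc j})) else 0)"
    using a b by (intro sum.cong) auto
  also have "\<dots> = (\<Sum>j\<in>{j\<in>{1..k-1}. Suc j \<in> S}. f (int (card {q\<in>S. q < Suc j})))"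
    by (rule sum.inter_filter[symmetric]) simp
  also have "\<dots> = (\<Sum>p\<in>S. f (int (card {q\<in>S. q < p})))"
  proof -
    have "Suc ` {j\<in>{1..k-1}. Suc j \<in> S} = S"
    proof
      show "S \<subseteq> Suc ` {j\<in>{1..k-1}. Suc j \<in> S}"
      proof
        fix p assume p: "p \<in> S"
        then have "i < p" "p \<le> k" unfolding S_def by auto
        then have "p = Suc (p - 1)" "p - 1 \<in> {1..k-1}" using i1 by auto
        then show "p \<in> Suc ` {j\<in>{1..k-1}. Suc j \<in> S}" using p by (metis (mono_tags, lifting) image_eqI mem_Collect_eq)
      qed
    qed auto
    moreover have "inj_on Suc {j\<in>{1..k-1}. Suc j \<in> S}" by simp
    ultimately show ?thesis using sum.reindex[of Suc "{j\<in>{1..k-1}. Suc j \<in> S}" "\<lambda>p. f (int (card {q\<in>S. q < p}))"]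
      by simp
  qed
  also have "\<dots> = (\<Sum>c<card S. f (int c))" by (rule rank_sum[OF fS])
  also have "\<dots> = (\<Sum>c<card S. ln ((real n - real c) / (real n - real c - 1)))" unfolding f_def by simp
  also have "\<dots> = ln (real n / (real n - real (card S)))" by (rule telescope[OF cS])
  finally show ?thesis unfolding f_def mc .
qed


lemma main:
  assumes k: "2 \<le> k"
  shows "(\<Sum>j=1..k-1. \<Sum>e\<in>live E dth bth t sig j.
            (if e > attach E dth bth t sig (Suc j)
             then ln ((real n - of_int (ell E dth bth t sig j e))
                      / (real n - of_int (ell E dth bth t sig j e) - 1))
             else 0))
       = (\<Sum>j=1..k-1. ln (real n / (real n - real (mcount E dth bth t sig j k))))"
proof -
  define G where "G j e = (if e > aT (Suc j) then ln ((real n - of_int (ll j e)) / (real n - of_int (ll j e) - 1)) else 0)" for j e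
  define F where "F i j = (if i \<le> j \<and> alive i j \<and> aT (Suc j) < t i
            then ln ((real n - of_int (ll j (t i))) / (real n - of_int (ll j (t i)) - 1)) else 0)" for i j
  have inner: "(\<Sum>e\<in>lv j. G j e) = (\<Sum>i\<in>{1..k-1}. F i j)" if j: "j \<in> {1..k-1}" for j
  proof -
    have inj: "inj_on t {i \<in> {1..j}. alive i j}" by (rule inj_onI) (use t_eq_iff in auto)
    have "(\<Sum>e\<in>lv j. G j e) = (\<Sum>i\<in>{i \<in> {1..j}. alive i j}. G j (t i))"
      unfolding live_eq by (rule sum.reindex[OF inj, unfolded comp_def])
    also have "{i \<in> {1..j}. alive i j} = {i \<in> {1..k-1}. i \<le> j \<and> alive i j}" using j by auto
    also have "(\<Sum>i\<in>{i \<in> {1..k-1}. i \<le> j \<and> alive i j}. G j (t i))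
        = (\<Sum>i\<in>{1..k-1}. if i \<le> j \<and> alive i j then G j (t i) else 0)"
      by (rule sum.inter_filter) simp
    also have "\<dots> = (\<Sum>i\<in>{1..k-1}. F i j)" unfolding F_def G_def by (intro sum.cong) auto
    finally show ?thesis .
  qed
  have "(\<Sum>j=1..k-1. \<Sum>e\<in>lv j. G j e) = (\<Sum>j=1..k-1. \<Sum>i\<in>{1..k-1}. F i j)"
    using inner by (intro sum.cong) auto
  also have "\<dots> = (\<Sum>i=1..k-1. \<Sum>j\<in>{1..k-1}. F i j)" by (rule sum.swap)
  also have "\<dots> = (\<Sum>i=1..k-1. ln (real n / (real n - real (mcount E dth bth t sig i k))))"
    unfolding F_def using per_i k by (intro sum.cong) auto
  finally show ?thesis unfolding G_def .
qed

end

theorem lemma4: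
  fixes n :: nat and t :: "nat \<Rightarrow> real" and E :: "real set"
    and dth bth :: "real \<Rightarrow> nat" and sig :: "nat \<Rightarrow> nat" and k :: nat
  assumes t_incr: "\<forall>i\<ge>1. t i < t (Suc i)"
    and E_locfin: "\<forall>a b. finite (E \<inter> {a..b})"
    and E_pairs: "\<forall>\<tau>\<in>E. dth \<tau> < n \<and> bth \<tau> < n \<and> dth \<tau> \<noteq> bth \<tau>"
    and sig_ok: "\<forall>i\<ge>1. sig i < n"
    and t_notE: "\<forall>i\<ge>1. t i \<notin> E"
    and attach_ex: "\<forall>j\<ge>2. \<exists>s. meets E dth bth t sig j s"
    and k: "2 \<le> k"
  shows "(\<Sum>j=1..k-1. \<Sum>e\<in>live E dth bth t sig j.
            (if e > attach E dth bth t sig (Suc j)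
             then ln ((real n - of_int (ell E dth bth t sig j e))
                      / (real n - of_int (ell E dth bth t sig j e) - 1))
             else 0))
       = (\<Sum>j=1..k-1. ln (real n / (real n - real (mcount E dth bth t sig j k))))"
proof -
  interpret smgp n t E dth bth sig
    by unfold_locales (use t_incr E_locfin E_pairs sig_ok t_notE attach_ex in auto)
  show ?thesis by (rule main[OF k])
qed

end
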